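(* For each $\kappa>0$ there exists a constant $D_{\max}(\kappa)$ such that if $D>D_{\max}(\kappa)$ then the functional $\mathcal J$ is globally convex on $W^{1,2}(\mathbb{T})$.
   Context: $\mathbb{T}=[0,1]$ with endpoints identified; $D>0,\kappa>0$; $$\mathcal J(u)=\frac D2\int_0^1|u_x|^2dx+\frac12\int_0^1u^2dx-\kappa\log\Big(\int_0^1e^udx\Big),\qquad u\in W^{1,2}(\mathbb{T}).$$ *)

theory Defs
  imports "HOL-Analysis.Analysis"
begin

text \<open>An element of W^{1,2}(T), T = [0,1] with endpoints identified, represented by its
  absolutely continuous representative u together with its (weak) derivative g:
  g is square integrable on [0,1], u(x) = u(0) + int_0^x g for x in [0,1], and u(0) = u(1).\<close>
definition W12T :: "(real \<Rightarrow> real) \<Rightarrow> (real \<Rightarrow> real) \<Rightarrow> bool" where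
  "W12T u g \<longleftrightarrow>
     g integrable_on {0..1} \<and> (\<lambda>x. (g x)^2) integrable_on {0..1} \<and>
     (\<forall>x\<in>{0..1}. u x = u 0 + integral {0..x} g) \<and> u 0 = u 1"

definition Jfun :: "real \<Rightarrow> real \<Rightarrow> (real \<Rightarrow> real) \<Rightarrow> (real \<Rightarrow> real) \<Rightarrow> real" where
  "Jfun D \<kappa> u g =
     D / 2 * integral {0..1} (\<lambda>x. (g x)^2) + 1 / 2 * integral {0..1} (\<lambda>x. (u x)^2)
     - \<kappa> * ln (integral {0..1} (\<lambda>x. exp (u x)))"

text \<open>Global convexity of J on W^{1,2}(T): the derivative of a convex combination is
  the convex combination of derivatives.\<close>
definition J_globally_convex :: "real \<Rightarrow> real \<Rightarrow> bool" where
  "J_globally_convex D \<kappa> \<longleftrightarrow>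
     (\<forall>u1 g1 u2 g2 t. W12T u1 g1 \<longrightarrow> W12T u2 g2 \<longrightarrow> 0 \<le> t \<longrightarrow> t \<le> 1 \<longrightarrow>
        Jfun D \<kappa> (\<lambda>x. t * u1 x + (1 - t) * u2 x) (\<lambda>x. t * g1 x + (1 - t) * g2 x)
          \<le> t * Jfun D \<kappa> u1 g1 + (1 - t) * Jfun D \<kappa> u2 g2)"

end

theory Submission
  imports Defs "HOL-Probability.Hoeffding"
begin


lemma hoeff_real:
  fixes a b m l :: real
  assumes ab: "a < b" and am: "a \<le> m" and mb: "m \<le> b"
  shows "((b - m) * exp (l * a) + (m - a) * exp (l * b)) / (b - a)
           \<le> exp (l * m + l^2 * (b - a)^2 / 8)"
proof -
  define p where "p = (m - a) / (b - a)"
  define h where "h = l * (b - a)"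
  have p0: "0 \<le> p" and p1: "p \<le> 1" using ab am mb by (auto simp: p_def field_simps)
  have pos: "0 < 1 + p * (exp h - 1)"
  proof -
    have "1 + p * (exp h - 1) = (1 - p) + p * exp h" by (simp add: algebra_simps)
    moreover have "0 \<le> 1 - p" using p1 by simp
    moreover have "(1 - p) + p * exp h > 0"
    proof (cases "p = 0")
      case True then show ?thesis by simp
    next
      case False then have "p * exp h > 0" using p0 by simp
      then show ?thesis using p1 by linarith
    qed
    ultimately show ?thesis by simp
  qed
  have key: "ln (1 + p * (exp h - 1)) \<le> h * p + h^2 / 8"
  proof (cases "h \<ge> 0")
    case True
    from Hoeffdings_lemma_aux[OF True p0] show ?thesis by simp
  next
    case False
    have h': "0 \<le> - h" using False by simp
    have p': "0 \<le> 1 - p" using p1 by simp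
    from Hoeffdings_lemma_aux[OF h' p']
    have A: "- (- h) * (1 - p) + ln (1 + (1 - p) * (exp (- h) - 1)) \<le> (- h)^2 / 8" .
    have pos2: "0 < 1 + (1 - p) * (exp (- h) - 1)"
    proof -
      have "1 + (1 - p) * (exp (- h) - 1) = p + (1 - p) * exp (- h)" by (simp add: algebra_simps)
      moreover have "p + (1 - p) * exp (- h) > 0"
      proof (cases "p = 1")
        case True then show ?thesis by simp
      next
        case False then have "(1 - p) * exp (-h) > 0" using p1 by simp
        then show ?thesis using p0 by linarith
      qed
      ultimately show ?thesis by simp
    qed
    have eq: "1 + p * (exp h - 1) = exp h * (1 + (1 - p) * (exp (- h) - 1))"
      by (simp add: algebra_simps exp_minus)
    have "ln (1 + p * (exp h - 1)) = h + ln (1 + (1 - p) * (exp (- h) - 1))"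
      using pos2 by (simp add: eq ln_mult)
    then show ?thesis using A by (simp add: algebra_simps)
  qed
  have "1 + p * (exp h - 1) \<le> exp (h * p + h^2 / 8)"
    using key pos by (metis exp_le_cancel_iff exp_ln)
  then have "exp (l * a) * (1 + p * (exp h - 1)) \<le> exp (l * a) * exp (h * p + h^2 / 8)"
    by simp
  moreover have "exp (l * a) * (1 + p * (exp h - 1)) =
      ((b - m) * exp (l * a) + (m - a) * exp (l * b)) / (b - a)"
  proof -
    have "exp (l * b) = exp (l * a) * exp h"
      by (simp add: h_def algebra_simps flip: exp_add)
    then show ?thesis using ab by (simp add: p_def field_simps)
  qed
  moreover have "exp (l * a) * exp (h * p + h^2 / 8) = exp (l * m + l^2 * (b - a)^2 / 8)"
  proof -
    have "l * a + (h * p + h^2 / 8) = l * m + l^2 * (b - a)^2 / 8"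
      using ab by (simp add: h_def p_def field_simps power2_eq_square)
    then show ?thesis by (simp flip: exp_add)
  qed
  ultimately show ?thesis by simp
qed

lemma pos_integral01:
  fixes f :: "real \<Rightarrow> real"
  assumes c: "continuous_on {0..1} f" and p: "\<forall>x\<in>{0..1}. 0 < f x"
  shows "0 < integral {0..1} f"
proof -
  obtain x0 where x0: "x0 \<in> {0..1}" "\<forall>y\<in>{0..1}. f x0 \<le> f y"
    using continuous_attains_inf[OF compact_Icc _ c] by auto
  have "integral {0..1} (\<lambda>x::real. f x0) \<le> integral {0..1} f"
    by (rule integral_le[of "\<lambda>x. f x0" "{0..1}" f]) (use x0 c in \<open>auto intro: integrable_continuous_interval\<close>)
  moreover have "integral {0..1} (\<lambda>x::real. f x0) = f x0" by simp
  moreover have "0 < f x0" using p x0(1) by blast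
  ultimately show ?thesis by linarith
qed

lemma hoeff_int:
  fixes \<rho> w :: "real \<Rightarrow> real" and a b l :: real
  assumes \<rho>c: "continuous_on {0..1} \<rho>" and \<rho>p: "\<forall>x\<in>{0..1}. 0 < \<rho> x"
    and wc: "continuous_on {0..1} w" and bnd: "\<forall>x\<in>{0..1}. a \<le> w x \<and> w x \<le> b"
  shows "integral {0..1} (\<lambda>x. \<rho> x * exp (l * w x)) \<le>
    integral {0..1} \<rho> * exp (l * (integral {0..1} (\<lambda>x. \<rho> x * w x) / integral {0..1} \<rho>)
       + l^2 * (b - a)^2 / 8)"
proof -
  define Z where "Z = integral {0..1} \<rho>"
  define P where "P = integral {0..1} (\<lambda>x. \<rho> x * w x)"
  have Z: "0 < Z" unfolding Z_def by (rule pos_integral01[OF \<rho>c \<rho>p])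
  have i\<rho>: "\<rho> integrable_on {0..1}" by (rule integrable_continuous_interval[OF \<rho>c])
  have i\<rho>w: "(\<lambda>x. \<rho> x * w x) integrable_on {0..1}"
    by (rule integrable_continuous_interval) (intro continuous_intros \<rho>c wc)
  have i\<rho>e: "(\<lambda>x. \<rho> x * exp (l * w x)) integrable_on {0..1}"
    by (rule integrable_continuous_interval) (intro continuous_intros \<rho>c wc)
  have ab: "a \<le> b" using bnd by fastforce
  show ?thesis
  proof (cases "a = b")
    case True
    then have wa: "\<forall>x\<in>{0..1}. w x = a" using bnd by fastforce
    have "integral {0..1} (\<lambda>x. \<rho> x * exp (l * w x)) = integral {0..1} (\<lambda>x. \<rho> x * exp (l * a))"
      by (rule integral_cong) (use wa in auto)
    also have "\<dots> = Z * exp (l * a)" unfolding Z_def by simp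
    finally have e1: "integral {0..1} (\<lambda>x. \<rho> x * exp (l * w x)) = Z * exp (l * a)" .
    have "P = integral {0..1} (\<lambda>x. \<rho> x * a)" unfolding P_def
      by (rule integral_cong) (use wa in auto)
    also have "\<dots> = Z * a" unfolding Z_def by simp
    finally have "P / Z = a" using Z by simp
    then show ?thesis using e1 True by (simp flip: Z_def P_def)
  next
    case False
    then have ab: "a < b" using ab by simp
    define c1 where "c1 = (b * exp (l * a) - a * exp (l * b)) / (b - a)"
    define c2 where "c2 = (exp (l * b) - exp (l * a)) / (b - a)"
    have chord: "\<rho> x * exp (l * w x) \<le> c1 * \<rho> x + c2 * (\<rho> x * w x)" if x: "x \<in> {0..1}" for x
    proof -
      define y where "y = (b - w x) / (b - a)"
      have y0: "0 \<le> y" and y1: "y \<le> 1" using bnd x ab by (auto simp: y_def field_simps)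
      have "exp ((1 - y) * (l * b) + y * (l * a)) \<le> (1 - y) * exp (l * b) + y * exp (l * a)"
        using convex_onD[OF exp_convex, of y "l * b" "l * a"] y0 y1 by simp
      moreover have "(1 - y) * (l * b) + y * (l * a) = l * w x"
      proof -
        have yy: "y * (b - a) = b - w x" using ab by (simp add: y_def)
        have "(1 - y) * b + y * a = b - y * (b - a)" by (simp add: algebra_simps)
        then have "(1 - y) * b + y * a = w x" using yy by simp
        then show ?thesis by (metis distrib_left mult.left_commute)
      qed
      moreover have "(1 - y) * exp (l * b) + y * exp (l * a) = c1 + c2 * w x"
        using ab by (simp add: y_def c1_def c2_def field_simps)
      ultimately have "exp (l * w x) \<le> c1 + c2 * w x" by simp
      then have "\<rho> x * exp (l * w x) \<le> \<rho> x * (c1 + c2 * w x)"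
        using \<rho>p x by (intro mult_left_mono) (auto intro: less_imp_le)
      then show ?thesis by (simp add: algebra_simps)
    qed
    have "integral {0..1} (\<lambda>x. \<rho> x * exp (l * w x)) \<le>
          integral {0..1} (\<lambda>x. c1 * \<rho> x + c2 * (\<rho> x * w x))"
      by (rule integral_le) (use i\<rho>e chord in \<open>auto intro!: integrable_continuous_interval continuous_intros \<rho>c wc\<close>)
    also have "\<dots> = integral {0..1} (\<lambda>x. c1 * \<rho> x) + integral {0..1} (\<lambda>x. c2 * (\<rho> x * w x))"
      by (rule integral_add) (auto intro!: integrable_continuous_interval continuous_intros \<rho>c wc)
    also have "\<dots> = c1 * Z + c2 * P"
      unfolding Z_def P_def by simp
    finally have I1: "integral {0..1} (\<lambda>x. \<rho> x * exp (l * w x)) \<le> c1 * Z + c2 * P" .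
    have aZ: "a * Z \<le> P"
    proof -
      have "integral {0..1} (\<lambda>x. a * \<rho> x) \<le> P" unfolding P_def
        by (rule integral_le) (use i\<rho>w bnd \<rho>p in \<open>auto intro!: mult_right_mono integrable_continuous_interval continuous_intros \<rho>c wc less_imp_le simp: mult.commute\<close>)
      then show ?thesis by (simp add: Z_def)
    qed
    have bZ: "P \<le> b * Z"
    proof -
      have "P \<le> integral {0..1} (\<lambda>x. b * \<rho> x)" unfolding P_def
        by (rule integral_le) (use i\<rho>w bnd \<rho>p in \<open>auto intro!: mult_right_mono integrable_continuous_interval continuous_intros \<rho>c wc less_imp_le simp: mult.commute\<close>)
      then show ?thesis by (simp add: Z_def)
    qed
    define m where "m = P / Z"
    have am: "a \<le> m" and mb: "m \<le> b" using aZ bZ Z by (auto simp: m_def field_simps)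
    have mZ: "m * Z = P" using Z by (simp add: m_def)
    have ne: "b - a \<noteq> 0" using ab by simp
    have e1: "c1 * Z + c2 * P = ((b*Z - P) * exp (l * a) + (P - a*Z) * exp (l * b)) / (b - a)"
    proof -
      have c1': "c1 * (b - a) = b * exp (l * a) - a * exp (l * b)" using ne by (simp add: c1_def)
      have c2': "c2 * (b - a) = exp (l * b) - exp (l * a)" using ne by (simp add: c2_def)
      have "(c1 * Z + c2 * P) * (b - a) = (c1 * (b - a)) * Z + (c2 * (b - a)) * P"
        by (simp add: algebra_simps)
      also have "\<dots> = (b * exp (l * a) - a * exp (l * b)) * Z + (exp (l * b) - exp (l * a)) * P"
        by (simp only: c1' c2')
      also have "\<dots> = (b*Z - P) * exp (l * a) + (P - a*Z) * exp (l * b)"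
        by (simp add: algebra_simps)
      finally show ?thesis using ne by (simp add: eq_divide_eq)
    qed
    have e2: "Z * (((b - m) * exp (l * a) + (m - a) * exp (l * b)) / (b - a))
       = ((b*Z - m*Z) * exp (l * a) + (m*Z - a*Z) * exp (l * b)) / (b - a)"
      by (simp add: algebra_simps)
    have "c1 * Z + c2 * P = Z * (((b - m) * exp (l * a) + (m - a) * exp (l * b)) / (b - a))"
    proof -
      have e2': "Z * (((b - m) * exp (l * a) + (m - a) * exp (l * b)) / (b - a))
        = ((b*Z - P) * exp (l * a) + (P - a*Z) * exp (l * b)) / (b - a)"
        using e2 unfolding mZ .
      show ?thesis by (simp only: e1 e2')
    qed
    also have "\<dots> \<le> Z * exp (l * m + l^2 * (b - a)^2 / 8)"
      using hoeff_real[OF ab am mb, of l] Z by (intro mult_left_mono) auto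
    finally show ?thesis using I1 by (simp add: m_def Z_def P_def)
  qed
qed



lemma W12T_cont:
  assumes "W12T u g"
  shows "continuous_on {0..1} u"
proof -
  have gi: "g integrable_on {0..1}" using assms unfolding W12T_def by blast
  have "continuous_on {0..1} (\<lambda>x. u 0 + integral {0..x} g)"
    by (intro continuous_intros indefinite_integral_continuous_1 gi)
  moreover have "\<forall>x\<in>{0..1}. u 0 + integral {0..x} g = u x" using assms unfolding W12T_def by (metis)
  ultimately show ?thesis using continuous_on_eq by blast
qed

lemma sq_int:
  assumes "W12T u1 g1" "W12T u2 g2" and f: "\<And>x. f x = \<alpha> * g1 x + \<beta> * g2 x"
  shows "(\<lambda>x. (f x)^2) integrable_on {0..1}"
proof -
  have i1: "g1 integrable_on {0..1}" "(\<lambda>x. (g1 x)^2) integrable_on {0..1}"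
    using assms unfolding W12T_def by blast+
  have i2: "g2 integrable_on {0..1}" "(\<lambda>x. (g2 x)^2) integrable_on {0..1}"
    using assms unfolding W12T_def by blast+
  have m1: "g1 \<in> borel_measurable (lebesgue_on {0..1})" by (rule integrable_imp_measurable[OF i1(1)])
  have m2: "g2 \<in> borel_measurable (lebesgue_on {0..1})" by (rule integrable_imp_measurable[OF i2(1)])
  have mf: "(\<lambda>x. (f x)^2) \<in> borel_measurable (lebesgue_on {0..1})"
    unfolding f using m1 m2 by measurable
  have ib: "(\<lambda>x. 2 * \<alpha>^2 * (g1 x)^2 + 2 * \<beta>^2 * (g2 x)^2) integrable_on {0..1}"
    using i1(2) i2(2) by (intro integrable_add integrable_on_mult_right) auto
  show ?thesis
  proof (rule measurable_bounded_by_integrable_imp_integrable_real[OF mf ib])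
    fix x
    have "0 \<le> (\<alpha> * g1 x - \<beta> * g2 x)^2" by simp
    then have "(\<alpha> * g1 x + \<beta> * g2 x)^2 \<le> 2 * \<alpha>^2 * (g1 x)^2 + 2 * \<beta>^2 * (g2 x)^2"
      by (simp add: power2_eq_square algebra_simps)
    then show "\<bar>(f x)^2\<bar> \<le> 2 * \<alpha>^2 * (g1 x)^2 + 2 * \<beta>^2 * (g2 x)^2" by (simp add: f)
  qed simp
qed

lemma osc_bound:
  assumes W1: "W12T u1 g1" and W2: "W12T u2 g2" and e: "0 < \<epsilon>" and x: "x \<in> {0..1}"
  shows "\<bar>(u1 x - u2 x) - (u1 0 - u2 0)\<bar>
     \<le> (\<epsilon> + integral {0..1} (\<lambda>y. (g1 y - g2 y)^2) / \<epsilon>) / 2"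
proof -
  have i1: "g1 integrable_on {0..1}" using W1 unfolding W12T_def by blast
  have i2: "g2 integrable_on {0..1}" using W2 unfolding W12T_def by blast
  have sub: "{0..x} \<subseteq> {0..1}" using x by auto
  have i1x: "g1 integrable_on {0..x}" by (rule integrable_on_subinterval[OF i1 sub])
  have i2x: "g2 integrable_on {0..x}" by (rule integrable_on_subinterval[OF i2 sub])
  have dsq: "(\<lambda>y. (g1 y - g2 y)^2) integrable_on {0..1}"
    by (rule sq_int[OF W1 W2, of _ 1 "-1"]) simp
  define h where "h = (\<lambda>y. \<epsilon> / 2 + (1 / (2 * \<epsilon>)) * (g1 y - g2 y)^2)"
  have ih: "h integrable_on {0..1}" unfolding h_def
    using dsq e by (intro integrable_add integrable_on_mult_right) auto
  have ihx: "h integrable_on {0..x}" by (rule integrable_on_subinterval[OF ih sub])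
  have hge: "\<bar>g1 y - g2 y\<bar> \<le> h y" for y
  proof -
    define d where "d = g1 y - g2 y"
    have "0 \<le> (\<bar>d\<bar> - \<epsilon>)^2" by simp
    then have "2 * \<epsilon> * \<bar>d\<bar> \<le> \<epsilon>^2 + d^2" by (simp add: power2_eq_square algebra_simps)
    then have "\<bar>d\<bar> \<le> \<epsilon> / 2 + (1 / (2 * \<epsilon>)) * d^2" using e
      by (simp add: field_simps power2_eq_square)
    then show ?thesis by (simp add: h_def d_def)
  qed
  have "u1 x - u2 x - (u1 0 - u2 0) = integral {0..x} g1 - integral {0..x} g2"
  proof -
    have "u1 x = u1 0 + integral {0..x} g1" using W1 x unfolding W12T_def by blast
    moreover have "u2 x = u2 0 + integral {0..x} g2" using W2 x unfolding W12T_def by blast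
    ultimately show ?thesis by simp
  qed
  also have "\<dots> = integral {0..x} (\<lambda>y. g1 y - g2 y)" by (rule integral_diff[OF i1x i2x, symmetric])
  finally have eq: "u1 x - u2 x - (u1 0 - u2 0) = integral {0..x} (\<lambda>y. g1 y - g2 y)" .
  have "\<bar>integral {0..x} (\<lambda>y. g1 y - g2 y)\<bar> \<le> integral {0..x} h"
    using integral_norm_bound_integral[OF integrable_diff[OF i1x i2x] ihx] hge
    by (simp add: real_norm_def)
  also have "\<dots> \<le> integral {0..1} h"
  proof (rule integral_subset_le[OF sub ihx ih])
    show "\<forall>y\<in>{0..1}. 0 \<le> h y" using hge by (meson abs_ge_zero order_trans)
  qed
  also have "integral {0..1} h = \<epsilon> / 2 + (1 / (2 * \<epsilon>)) * integral {0..1} (\<lambda>y. (g1 y - g2 y)^2)"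
  proof -
    have "integral {0..1} h = integral {0..1} (\<lambda>y::real. \<epsilon> / 2) + integral {0..1} (\<lambda>y. (1 / (2 * \<epsilon>)) * (g1 y - g2 y)^2)"
      unfolding h_def by (rule integral_add) (use dsq e in \<open>auto intro: integrable_on_mult_right\<close>)
    then show ?thesis by simp
  qed
  also have "\<dots> = (\<epsilon> + integral {0..1} (\<lambda>y. (g1 y - g2 y)^2) / \<epsilon>) / 2"
    using e by (simp add: field_simps)
  finally show ?thesis using eq by simp
qed



lemma core:
  fixes D \<kappa> t S :: real
  assumes W1: "W12T u1 g1" and W2: "W12T u2 g2" and t0: "0 \<le> t" and t1: "t \<le> 1"
    and \<kappa>: "0 < \<kappa>" and S: "\<forall>x\<in>{0..1}. \<bar>(u1 x - u2 x) - (u1 0 - u2 0)\<bar> \<le> S"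
  shows "Jfun D \<kappa> (\<lambda>x. t * u1 x + (1 - t) * u2 x) (\<lambda>x. t * g1 x + (1 - t) * g2 x)
     \<le> t * Jfun D \<kappa> u1 g1 + (1 - t) * Jfun D \<kappa> u2 g2
        + t * (1 - t) * (\<kappa> * S^2 / 2 - D / 2 * integral {0..1} (\<lambda>x. (g1 x - g2 x)^2))"
proof -
  define u where "u = (\<lambda>x. t * u1 x + (1 - t) * u2 x)"
  define g where "g = (\<lambda>x. t * g1 x + (1 - t) * g2 x)"
  define w where "w = (\<lambda>x. u1 x - u2 x)"
  have c1: "continuous_on {0..1} u1" by (rule W12T_cont[OF W1])
  have c2: "continuous_on {0..1} u2" by (rule W12T_cont[OF W2])
  have cu: "continuous_on {0..1} u" unfolding u_def by (intro continuous_intros c1 c2)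
  have cw: "continuous_on {0..1} w" unfolding w_def by (intro continuous_intros c1 c2)
  define \<rho> where "\<rho> = (\<lambda>x. exp (u x))"
  have c\<rho>: "continuous_on {0..1} \<rho>" unfolding \<rho>_def by (intro continuous_intros cu)
  have p\<rho>: "\<forall>x\<in>{0..1}. 0 < \<rho> x" by (simp add: \<rho>_def)
  define Z where "Z = integral {0..1} \<rho>"
  define Z1 where "Z1 = integral {0..1} (\<lambda>x. exp (u1 x))"
  define Z2 where "Z2 = integral {0..1} (\<lambda>x. exp (u2 x))"
  define m where "m = integral {0..1} (\<lambda>x. \<rho> x * w x) / Z"
  define a where "a = w 0 - S"
  define b where "b = w 0 + S"
  have bnd: "\<forall>x\<in>{0..1}. a \<le> w x \<and> w x \<le> b"
    using S by (auto simp: a_def b_def w_def abs_le_iff)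
  have ba: "(b - a)^2 / 8 = S^2 / 2" by (simp add: a_def b_def power2_eq_square)
  have Zp: "0 < Z" unfolding Z_def by (rule pos_integral01[OF c\<rho> p\<rho>])
  have Z1p: "0 < Z1" unfolding Z1_def by (rule pos_integral01) (auto intro!: continuous_intros c1)
  have Z2p: "0 < Z2" unfolding Z2_def by (rule pos_integral01) (auto intro!: continuous_intros c2)
  have Z1e: "Z1 = integral {0..1} (\<lambda>x. \<rho> x * exp ((1 - t) * w x))"
  proof -
    have "\<And>x. exp (u1 x) = \<rho> x * exp ((1 - t) * w x)"
      by (simp add: \<rho>_def u_def w_def algebra_simps flip: exp_add)
    then show ?thesis by (simp add: Z1_def)
  qed
  have Z2e: "Z2 = integral {0..1} (\<lambda>x. \<rho> x * exp ((- t) * w x))"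
  proof -
    have "\<And>x. exp (u2 x) = \<rho> x * exp ((- t) * w x)"
      by (simp add: \<rho>_def u_def w_def algebra_simps flip: exp_add)
    then show ?thesis by (simp add: Z2_def)
  qed
  have H1: "Z1 \<le> Z * exp ((1 - t) * m + (1 - t)^2 * (S^2 / 2))"
    using hoeff_int[OF c\<rho> p\<rho> cw bnd, of "1 - t"] unfolding Z1e m_def Z_def ba[symmetric]
    by (simp add: power_mult_distrib mult.assoc)
  have H2: "Z2 \<le> Z * exp ((- t) * m + t^2 * (S^2 / 2))"
    using hoeff_int[OF c\<rho> p\<rho> cw bnd, of "- t"] unfolding Z2e m_def Z_def ba[symmetric]
    by (simp add: power_mult_distrib mult.assoc)
  have L1: "ln Z1 \<le> ln Z + ((1 - t) * m + (1 - t)^2 * (S^2 / 2))"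
  proof -
    have "ln Z1 \<le> ln (Z * exp ((1 - t) * m + (1 - t)^2 * (S^2 / 2)))"
      using H1 Z1p by (rule ln_mono)
    also have "\<dots> = ln Z + ((1 - t) * m + (1 - t)^2 * (S^2 / 2))"
      using Zp by (simp add: ln_mult)
    finally show ?thesis .
  qed
  have L2: "ln Z2 \<le> ln Z + ((- t) * m + t^2 * (S^2 / 2))"
  proof -
    have "ln Z2 \<le> ln (Z * exp ((- t) * m + t^2 * (S^2 / 2)))"
      using H2 Z2p by (rule ln_mono)
    also have "\<dots> = ln Z + ((- t) * m + t^2 * (S^2 / 2))"
      using Zp by (simp add: ln_mult)
    finally show ?thesis .
  qed
  have LL: "t * ln Z1 + (1 - t) * ln Z2 \<le> ln Z + t * (1 - t) * (S^2 / 2)"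
  proof -
    have "t * ln Z1 \<le> t * (ln Z + ((1 - t) * m + (1 - t)^2 * (S^2 / 2)))"
      using L1 t0 by (rule mult_left_mono)
    moreover have "(1 - t) * ln Z2 \<le> (1 - t) * (ln Z + ((- t) * m + t^2 * (S^2 / 2)))"
      using L2 t1 by (intro mult_left_mono) auto
    moreover have "t * (ln Z + ((1 - t) * m + (1 - t)^2 * (S^2 / 2)))
        + (1 - t) * (ln Z + ((- t) * m + t^2 * (S^2 / 2))) = ln Z + t * (1 - t) * (S^2 / 2)"
      by (simp add: power2_eq_square field_simps)
    ultimately show ?thesis by linarith
  qed
  have ig1: "(\<lambda>x. (g1 x)^2) integrable_on {0..1}" using W1 unfolding W12T_def by blast
  have ig2: "(\<lambda>x. (g2 x)^2) integrable_on {0..1}" using W2 unfolding W12T_def by blast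
  have igg: "(\<lambda>x. (g x)^2) integrable_on {0..1}"
    by (rule sq_int[OF W1 W2, of _ t "1 - t"]) (simp add: g_def)
  have igd: "(\<lambda>x. (g1 x - g2 x)^2) integrable_on {0..1}"
    by (rule sq_int[OF W1 W2, of _ 1 "-1"]) simp
  define G where "G = integral {0..1} (\<lambda>x. (g x)^2)"
  define G1 where "G1 = integral {0..1} (\<lambda>x. (g1 x)^2)"
  define G2 where "G2 = integral {0..1} (\<lambda>x. (g2 x)^2)"
  define Gd where "Gd = integral {0..1} (\<lambda>x. (g1 x - g2 x)^2)"
  have QG: "t * G1 + (1 - t) * G2 = G + t * (1 - t) * Gd"
  proof -
    have "integral {0..1} (\<lambda>x. t * (g1 x)^2 + (1 - t) * (g2 x)^2) = t * G1 + (1 - t) * G2"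
      unfolding G1_def G2_def
      by (subst integral_add) (use ig1 ig2 in \<open>auto intro: integrable_on_mult_right\<close>)
    moreover have "integral {0..1} (\<lambda>x. t * (g1 x)^2 + (1 - t) * (g2 x)^2)
        = integral {0..1} (\<lambda>x. (g x)^2 + t * (1 - t) * (g1 x - g2 x)^2)"
      by (rule integral_cong) (simp add: g_def power2_eq_square algebra_simps)
    moreover have "integral {0..1} (\<lambda>x. (g x)^2 + t * (1 - t) * (g1 x - g2 x)^2) = G + t * (1 - t) * Gd"
      unfolding G_def Gd_def
      by (subst integral_add) (use igg igd in \<open>auto intro: integrable_on_mult_right\<close>)
    ultimately show ?thesis by simp
  qed
  define U where "U = integral {0..1} (\<lambda>x. (u x)^2)"
  define U1 where "U1 = integral {0..1} (\<lambda>x. (u1 x)^2)"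
  define U2 where "U2 = integral {0..1} (\<lambda>x. (u2 x)^2)"
  define Wd where "Wd = integral {0..1} (\<lambda>x. (w x)^2)"
  have iu1: "(\<lambda>x. (u1 x)^2) integrable_on {0..1}"
    by (rule integrable_continuous_interval) (intro continuous_intros c1)
  have iu2: "(\<lambda>x. (u2 x)^2) integrable_on {0..1}"
    by (rule integrable_continuous_interval) (intro continuous_intros c2)
  have iu: "(\<lambda>x. (u x)^2) integrable_on {0..1}"
    by (rule integrable_continuous_interval) (intro continuous_intros cu)
  have iw: "(\<lambda>x. (w x)^2) integrable_on {0..1}"
    by (rule integrable_continuous_interval) (intro continuous_intros cw)
  have QU: "t * U1 + (1 - t) * U2 = U + t * (1 - t) * Wd"
  proof -
    have "integral {0..1} (\<lambda>x. t * (u1 x)^2 + (1 - t) * (u2 x)^2) = t * U1 + (1 - t) * U2"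
      unfolding U1_def U2_def
      by (subst integral_add) (use iu1 iu2 in \<open>auto intro: integrable_on_mult_right\<close>)
    moreover have "integral {0..1} (\<lambda>x. t * (u1 x)^2 + (1 - t) * (u2 x)^2)
        = integral {0..1} (\<lambda>x. (u x)^2 + t * (1 - t) * (w x)^2)"
      by (rule integral_cong) (simp add: u_def w_def power2_eq_square algebra_simps)
    moreover have "integral {0..1} (\<lambda>x. (u x)^2 + t * (1 - t) * (w x)^2) = U + t * (1 - t) * Wd"
      unfolding U_def Wd_def
      by (subst integral_add) (use iu iw in \<open>auto intro: integrable_on_mult_right\<close>)
    ultimately show ?thesis by simp
  qed
  have Wd0: "0 \<le> Wd" unfolding Wd_def by (rule integral_nonneg[OF iw]) simp
  have tt: "0 \<le> t * (1 - t)" using t0 t1 by simp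
  have J: "Jfun D \<kappa> u g = D / 2 * G + 1 / 2 * U - \<kappa> * ln Z"
    by (simp add: Jfun_def G_def U_def Z_def \<rho>_def)
  have J1: "Jfun D \<kappa> u1 g1 = D / 2 * G1 + 1 / 2 * U1 - \<kappa> * ln Z1"
    by (simp add: Jfun_def G1_def U1_def Z1_def)
  have J2: "Jfun D \<kappa> u2 g2 = D / 2 * G2 + 1 / 2 * U2 - \<kappa> * ln Z2"
    by (simp add: Jfun_def G2_def U2_def Z2_def)
  have "t * Jfun D \<kappa> u1 g1 + (1 - t) * Jfun D \<kappa> u2 g2
      = D / 2 * (t * G1 + (1 - t) * G2) + 1 / 2 * (t * U1 + (1 - t) * U2)
        - \<kappa> * (t * ln Z1 + (1 - t) * ln Z2)"
    unfolding J1 J2 by (simp add: field_simps)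
  also have "\<dots> = D / 2 * G + D / 2 * (t * (1 - t) * Gd) + 1 / 2 * U + 1 / 2 * (t * (1 - t) * Wd)
        - \<kappa> * (t * ln Z1 + (1 - t) * ln Z2)"
    unfolding QG QU by (simp add: field_simps)
  finally have R: "t * Jfun D \<kappa> u1 g1 + (1 - t) * Jfun D \<kappa> u2 g2 = \<dots>" .
  have K: "\<kappa> * (t * ln Z1 + (1 - t) * ln Z2) \<le> \<kappa> * (ln Z + t * (1 - t) * (S^2 / 2))"
    using LL \<kappa> by (intro mult_left_mono) auto
  have W: "0 \<le> 1 / 2 * (t * (1 - t) * Wd)" using tt Wd0 by simp
  have "Jfun D \<kappa> u g \<le> t * Jfun D \<kappa> u1 g1 + (1 - t) * Jfun D \<kappa> u2 g2
        + t * (1 - t) * (\<kappa> * S^2 / 2 - D / 2 * Gd)"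
  proof -
    have E3: "t * (1 - t) * (\<kappa> * S^2 / 2 - D / 2 * Gd)
        = \<kappa> * (t * (1 - t) * (S^2 / 2)) - D / 2 * (t * (1 - t) * Gd)"
      by (simp add: field_simps)
    have E4: "\<kappa> * (ln Z + t * (1 - t) * (S^2 / 2)) = \<kappa> * ln Z + \<kappa> * (t * (1 - t) * (S^2 / 2))"
      by (simp add: algebra_simps)
    have "D / 2 * G + 1 / 2 * U - \<kappa> * ln Z \<le> (D / 2 * G + D / 2 * (t * (1 - t) * Gd) + 1 / 2 * U
        + 1 / 2 * (t * (1 - t) * Wd) - \<kappa> * (t * ln Z1 + (1 - t) * ln Z2))
        + t * (1 - t) * (\<kappa> * S^2 / 2 - D / 2 * Gd)"
      using K W E3 E4 by argo
    then show ?thesis by (simp only: R J)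
  qed
  then show ?thesis by (simp add: u_def g_def Gd_def)
qed



theorem mainTheorem5:
  fixes \<kappa> :: real
  assumes "\<kappa> > 0"
  shows "\<exists>Dmax. \<forall>D. D > 0 \<longrightarrow> D > Dmax \<longrightarrow> J_globally_convex D \<kappa>"
proof (rule exI[where x = \<kappa>], intro allI impI)
  fix D :: real
  assume D0: "D > 0" and D\<kappa>: "D > \<kappa>"
  show "J_globally_convex D \<kappa>"
    unfolding J_globally_convex_def
  proof (intro allI impI)
    fix u1 g1 u2 g2 and t :: real
    assume W1: "W12T u1 g1" and W2: "W12T u2 g2" and t0: "0 \<le> t" and t1: "t \<le> 1"
    define Gd where "Gd = integral {0..1} (\<lambda>x. (g1 x - g2 x)^2)"
    have igd: "(\<lambda>x. (g1 x - g2 x)^2) integrable_on {0..1}"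
      by (rule sq_int[OF W1 W2, of _ 1 "-1"]) simp
    have Gd0: "0 \<le> Gd" unfolding Gd_def by (rule integral_nonneg[OF igd]) simp
    have tt: "0 \<le> t * (1 - t)" using t0 t1 by simp
    obtain S where S: "\<forall>x\<in>{0..1}. \<bar>(u1 x - u2 x) - (u1 0 - u2 0)\<bar> \<le> S"
      and SS: "\<kappa> * S^2 / 2 - D / 2 * Gd \<le> 0"
    proof (cases "Gd = 0")
      case True
      have "\<forall>x\<in>{0..1}. \<bar>(u1 x - u2 x) - (u1 0 - u2 0)\<bar> \<le> 0"
      proof
        fix x :: real assume x: "x \<in> {0..1}"
        show "\<bar>(u1 x - u2 x) - (u1 0 - u2 0)\<bar> \<le> 0"
        proof (rule field_le_epsilon)
          fix e :: real assume e: "0 < e"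
          have "\<bar>(u1 x - u2 x) - (u1 0 - u2 0)\<bar> \<le> (2 * e + Gd / (2 * e)) / 2"
            unfolding Gd_def by (rule osc_bound[OF W1 W2 _ x]) (use e in simp)
          moreover have "(2 * e + Gd / (2 * e)) / 2 = 0 + e" using True by simp
          ultimately show "\<bar>(u1 x - u2 x) - (u1 0 - u2 0)\<bar> \<le> 0 + e" by linarith
        qed
      qed
      moreover have "\<kappa> * 0^2 / 2 - D / 2 * Gd \<le> 0" using True by simp
      ultimately show ?thesis by (rule that)
    next
      case False
      then have Gp: "0 < Gd" using Gd0 by simp
      define S where "S = sqrt Gd"
      have Sp: "0 < S" using Gp by (simp add: S_def)
      have S2: "S^2 = Gd" using Gd0 by (simp add: S_def)
      have "\<forall>x\<in>{0..1}. \<bar>(u1 x - u2 x) - (u1 0 - u2 0)\<bar> \<le> (S + Gd / S) / 2"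
        unfolding Gd_def by (intro ballI osc_bound[OF W1 W2 Sp])
      moreover have "(S + Gd / S) / 2 = S" using Sp S2 by (simp add: field_simps power2_eq_square)
      moreover have "\<kappa> * S^2 / 2 - D / 2 * Gd \<le> 0"
      proof -
        have le: "\<kappa> * Gd \<le> D * Gd" by (rule mult_right_mono) (use D\<kappa> Gd0 in auto)
        have eq: "\<kappa> * S^2 / 2 - D / 2 * Gd = (\<kappa> * Gd - D * Gd) / 2" unfolding S2 by simp
        show ?thesis unfolding eq using le by simp
      qed
      ultimately show ?thesis by (intro that) auto
    qed
    have "Jfun D \<kappa> (\<lambda>x. t * u1 x + (1 - t) * u2 x) (\<lambda>x. t * g1 x + (1 - t) * g2 x)
     \<le> t * Jfun D \<kappa> u1 g1 + (1 - t) * Jfun D \<kappa> u2 g2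
        + t * (1 - t) * (\<kappa> * S^2 / 2 - D / 2 * Gd)"
      using core[OF W1 W2 t0 t1 assms S, of D] unfolding Gd_def .
    moreover have "t * (1 - t) * (\<kappa> * S^2 / 2 - D / 2 * Gd) \<le> 0"
      using tt SS by (simp add: mult_nonneg_nonpos)
    ultimately show "Jfun D \<kappa> (\<lambda>x. t * u1 x + (1 - t) * u2 x) (\<lambda>x. t * g1 x + (1 - t) * g2 x)
          \<le> t * Jfun D \<kappa> u1 g1 + (1 - t) * Jfun D \<kappa> u2 g2" by linarith
  qed
qed

end
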